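(* Let $\mathcal{W}=\{W_s:s\in\mathcal{S}\}$ be an arbitrarily varying channel with channel state sequence known at the receiver (AVC-CSR), with finite alphabets $\mathcal{X},\mathcal{Y}$ and finite state set $\mathcal{S}$. The capacity $C^{CSR-DC}(\mathcal{W})$ of deterministic code with respect to the maximal decoding error probability is positive if and only if there exist $x,x'\in\mathcal{X}$ such that for every state $s\in\mathcal{S}$ there exists $y\in\mathcal{Y}$ with $W_s(y|x)\neq W_s(y|x')$.
   Context: For an AVC-CSR, $W(y^N|x^N,s^N)=\prod_{i=1}^NW_{s_i}(y_i|x_i)$; the state sequence $s^N\in\mathcal{S}^N$ is arbitrary, unknown to the transmitter and known to the receiver. A deterministic code of length $N$ is a pair $(f,\phi)$, $f:\mathcal{M}\to\mathcal{X}^N$, $\phi:\mathcal{Y}^N\times\mathcal{S}^N\to\mathcal{M}$, with maximal decoding error $\lambda^{CSR}(\mathcal{W},f,\phi)=\max_{s^N\in\mathcal{S}^N}\max_{m\in\mathcal{M}}\big[1-\sum_{y^N:\phi(y^N,s^N)=m}W(y^N|f(m),s^N)\big]$. $C^{CSR-DC}(\mathcal{W})$ is the supremum of $R\ge0$ such that for every $\epsilon>0$ and all sufficiently large $N$ there is a deterministic code with $\frac1N\log|\mathcal{M}|>R-\epsilon$ and $\lambda^{CSR}(\mathcal{W},f,\phi)<\epsilon$. *)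

theory Defs
  imports "HOL-Analysis.Analysis" "HOL-Library.Extended_Real"
begin

text \<open>An AVC-CSR with finite input alphabet 'x, output alphabet 'y and finite state set 's
  is a family of stochastic matrices W s x y = W_s(y|x).\<close>

definition stochastic_family :: "('s \<Rightarrow> 'x \<Rightarrow> 'y::finite \<Rightarrow> real) \<Rightarrow> bool" where
  "stochastic_family W \<longleftrightarrow> (\<forall>s x y. W s x y \<ge> 0) \<and> (\<forall>s x. (\<Sum>y\<in>UNIV. W s x y) = 1)"

abbreviation words :: "nat \<Rightarrow> (nat \<Rightarrow> 'a) set" where
  "words N \<equiv> PiE {..<N} (\<lambda>_. UNIV)"

definition prod_channel :: "('s \<Rightarrow> 'x \<Rightarrow> 'y \<Rightarrow> real) \<Rightarrow> nat \<Rightarrow>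
    (nat \<Rightarrow> 'y) \<Rightarrow> (nat \<Rightarrow> 'x) \<Rightarrow> (nat \<Rightarrow> 's) \<Rightarrow> real" where
  "prod_channel W N y x s = (\<Prod>i<N. W (s i) (x i) (y i))"

definition csr_max_error :: "('s::finite \<Rightarrow> 'x \<Rightarrow> 'y::finite \<Rightarrow> real) \<Rightarrow> nat \<Rightarrow> nat \<Rightarrow>
    (nat \<Rightarrow> nat \<Rightarrow> 'x) \<Rightarrow> ((nat \<Rightarrow> 'y) \<Rightarrow> (nat \<Rightarrow> 's) \<Rightarrow> nat) \<Rightarrow> real" where
  "csr_max_error W N K f phi =
     Max ((\<lambda>(s, m). 1 - (\<Sum>y\<in>{y\<in>words N. phi y s = m}. prod_channel W N y (f m) s))
          ` (words N \<times> {..<K}))"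

definition csr_dc_achievable :: "('s::finite \<Rightarrow> 'x \<Rightarrow> 'y::finite \<Rightarrow> real) \<Rightarrow> real \<Rightarrow> bool" where
  "csr_dc_achievable W R \<longleftrightarrow>
     (\<forall>eps>0. \<exists>N0. \<forall>N\<ge>N0. \<exists>K f phi. K \<ge> 1 \<and>
        f ` {..<K} \<subseteq> words N \<and>
        log 2 (real K) / real N > R - eps \<and>
        csr_max_error W N K f phi < eps)"

definition C_CSR_DC :: "('s::finite \<Rightarrow> 'x \<Rightarrow> 'y::finite \<Rightarrow> real) \<Rightarrow> ereal" where
  "C_CSR_DC W = Sup (ereal ` {R. R \<ge> 0 \<and> csr_dc_achievable W R})"

end

theory Submission
  imports Defs
begin

lemma sum_words_prod:
  fixes h :: "nat \<Rightarrow> 'y::finite \<Rightarrow> 'c::comm_semiring_1"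
  shows "(\<Sum>y\<in>words N. \<Prod>i<N. h i (y i)) = (\<Prod>i<N. \<Sum>t\<in>UNIV. h i t)"
  by (subst prod_sum_PiE) auto

lemma prod_channel_nonneg:
  assumes "stochastic_family W" shows "prod_channel W N y c s \<ge> 0"
  using assms unfolding stochastic_family_def prod_channel_def by (auto intro: prod_nonneg)

lemma prod_channel_sum1:
  fixes W :: "'s \<Rightarrow> 'x \<Rightarrow> 'y::finite \<Rightarrow> real"
  assumes "stochastic_family W" shows "(\<Sum>y\<in>words N. prod_channel W N y c s) = 1"
  using assms unfolding prod_channel_def stochastic_family_def
  by (simp add: sum_words_prod[of "\<lambda>i t. W (s i) (c i) t"])

lemma finite_words: "finite (words N :: (nat \<Rightarrow> 'a::finite) set)"
  by (simp add: finite_PiE)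

lemma code_err_half:
  fixes W :: "'s::finite \<Rightarrow> 'x \<Rightarrow> 'y::finite \<Rightarrow> real"
  assumes stoch: "stochastic_family W" and hyp: "\<forall>x x'. \<exists>s. \<forall>y. W s x y = W s x' y"
    and K: "K \<ge> 2"
  shows "csr_max_error W N K f phi \<ge> 1/2"
proof -
  obtain sel where sel: "\<And>x x' y. W (sel x x') x y = W (sel x x') x' y"
    using hyp by metis
  define s where "s = (\<lambda>i. if i < N then sel (f 0 i) (f 1 i) else undefined)"
  have sw: "s \<in> words N" unfolding s_def by (auto split: if_splits)
  define P where "P = (\<lambda>y. prod_channel W N y (f 0) s)"
  have P1: "prod_channel W N y (f 1) s = P y" for y
    unfolding P_def prod_channel_def s_def by (intro prod.cong) (auto simp: sel[symmetric])
  define A0 where "A0 = {y\<in>words N. phi y s = 0}"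
  define A1 where "A1 = {y\<in>words N. phi y s = 1}"
  have fin: "finite (words N :: (nat \<Rightarrow> 'y) set)" by (rule finite_words)
  have "sum P A0 + sum P A1 = sum P (A0 \<union> A1)"
    by (subst sum.union_disjoint) (auto simp: A0_def A1_def intro: finite_subset[OF _ fin])
  also have "\<dots> \<le> sum P (words N)"
    by (rule sum_mono2[OF fin]) (auto simp: A0_def A1_def P_def prod_channel_nonneg[OF stoch])
  also have "\<dots> = 1" unfolding P_def by (rule prod_channel_sum1[OF stoch])
  finally have sum_le: "sum P A0 + sum P A1 \<le> 1" .
  let ?S = "(\<lambda>(s, m). 1 - (\<Sum>y\<in>{y\<in>words N. phi y s = m}. prod_channel W N y (f m) s))
          ` (words N \<times> {..<K})"
  have finS: "finite ?S" by (intro finite_imageI finite_cartesian_product finite_words finite_lessThan)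
  have e0: "1 - sum P A0 \<in> ?S"
    using sw K unfolding A0_def P_def by (intro image_eqI[where x="(s,0)"]) auto
  have e1: "1 - sum P A1 \<in> ?S"
  proof -
    have eq1: "sum P A1 = (\<Sum>y\<in>A1. prod_channel W N y (f 1) s)"
      by (intro sum.cong refl) (rule P1[symmetric])
    have "(s, 1) \<in> words N \<times> {..<K}" using sw K by auto
    then have "(\<lambda>(s, m). 1 - (\<Sum>y\<in>{y\<in>words N. phi y s = m}. prod_channel W N y (f m) s)) (s,1) \<in> ?S"
      by (rule imageI)
    then show ?thesis unfolding eq1 unfolding A1_def by (simp only: case_prod_conv)
  qed
  have "Max ?S \<ge> 1 - sum P A0" "Max ?S \<ge> 1 - sum P A1"
    using Max_ge[OF finS e0] Max_ge[OF finS e1] by auto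
  then show ?thesis using sum_le unfolding csr_max_error_def by linarith
qed

lemma sqrt_prod: "sqrt (prod f A) = (\<Prod>i\<in>A. sqrt (f i))"
  by (induct A rule: infinite_finite_induct) (auto simp: real_sqrt_mult)

definition mld :: "('s \<Rightarrow> 'x \<Rightarrow> 'y \<Rightarrow> real) \<Rightarrow> nat \<Rightarrow> nat \<Rightarrow> (nat \<Rightarrow> nat \<Rightarrow> 'x) \<Rightarrow>
   (nat \<Rightarrow> 'y) \<Rightarrow> (nat \<Rightarrow> 's) \<Rightarrow> nat" where
  "mld W N K f y s = (SOME m. m < K \<and> (\<forall>m'<K. prod_channel W N y (f m') s \<le> prod_channel W N y (f m) s))"

lemma mld_prop:
  assumes "K \<ge> 1"
  shows "mld W N K f y s < K \<and> (\<forall>m'<K. prod_channel W N y (f m') s \<le> prod_channel W N y (f (mld W N K f y s)) s)"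
proof -
  let ?S = "(\<lambda>m. prod_channel W N y (f m) s) ` {..<K}"
  have ne: "?S \<noteq> {}" using assms by (auto simp: lessThan_empty_iff)
  have "Max ?S \<in> ?S" by (rule Max_in) (use ne in auto)
  then obtain m where m: "m < K" "Max ?S = prod_channel W N y (f m) s" by auto
  have "\<forall>m'<K. prod_channel W N y (f m') s \<le> prod_channel W N y (f m) s"
    using m by (metis (no_types, lifting) Max_ge finite_imageI finite_lessThan imageI lessThan_iff)
  then have "\<exists>m. m < K \<and> (\<forall>m'<K. prod_channel W N y (f m') s \<le> prod_channel W N y (f m) s)"
    using m by blast
  from someI_ex[OF this] show ?thesis unfolding mld_def .
qed

lemma err_bound:
  fixes W :: "'s \<Rightarrow> 'x \<Rightarrow> 'y::finite \<Rightarrow> real"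
  assumes stoch: "stochastic_family W" and K: "K \<ge> 1" and m: "m < K"
  shows "1 - (\<Sum>y\<in>{y\<in>words N. mld W N K f y s = m}. prod_channel W N y (f m) s)
     \<le> (\<Sum>m'\<in>{..<K} - {m}. \<Sum>y\<in>words N. sqrt (prod_channel W N y (f m) s * prod_channel W N y (f m') s))"
proof -
  define P where "P = (\<lambda>m y. prod_channel W N y (f m) s)"
  define A where "A = {y\<in>words N. mld W N K f y s = m}"
  have fin: "finite (words N :: (nat \<Rightarrow> 'y) set)" by (rule finite_words)
  have P0: "P k y \<ge> 0" for k y unfolding P_def by (rule prod_channel_nonneg[OF stoch])
  have "1 = sum (P m) (words N)" unfolding P_def by (rule prod_channel_sum1[OF stoch, symmetric])
  also have "\<dots> = sum (P m) (words N - A) + sum (P m) A"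
    by (rule sum.subset_diff) (auto simp: A_def fin)
  finally have eq: "1 - sum (P m) A = sum (P m) (words N - A)" by simp
  have pt: "P m y \<le> (\<Sum>m'\<in>{..<K} - {m}. sqrt (P m y * P m' y))" if "y \<in> words N - A" for y
  proof -
    define m0 where "m0 = mld W N K f y s"
    have m0: "m0 < K" "P m y \<le> P m0 y" using mld_prop[OF K, of W N f y s] m
      unfolding m0_def P_def by auto
    have ne: "m0 \<noteq> m" using that unfolding A_def m0_def by auto
    have "P m y = sqrt (P m y * P m y)" using P0 by (simp add: real_sqrt_mult)
    also have "\<dots> \<le> sqrt (P m y * P m0 y)" using m0 P0 by (intro real_sqrt_le_mono mult_left_mono) auto
    also have "\<dots> \<le> (\<Sum>m'\<in>{..<K} - {m}. sqrt (P m y * P m' y))"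
      by (rule member_le_sum) (use m0 ne P0 in auto)
    finally show ?thesis .
  qed
  have "sum (P m) (words N - A) \<le> (\<Sum>y\<in>words N - A. \<Sum>m'\<in>{..<K} - {m}. sqrt (P m y * P m' y))"
    by (rule sum_mono) (rule pt)
  also have "\<dots> \<le> (\<Sum>y\<in>words N. \<Sum>m'\<in>{..<K} - {m}. sqrt (P m y * P m' y))"
    by (rule sum_mono2[OF fin]) (blast, intro ballI sum_nonneg real_sqrt_ge_zero mult_nonneg_nonneg P0)
  also have "\<dots> = (\<Sum>m'\<in>{..<K} - {m}. \<Sum>y\<in>words N. sqrt (P m y * P m' y))"
    by (rule sum.swap)
  finally have "1 - sum (P m) A \<le> (\<Sum>m'\<in>{..<K} - {m}. \<Sum>y\<in>words N. sqrt (P m y * P m' y))"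
    using eq by linarith
  then show ?thesis by (simp only: P_def A_def)
qed

definition enc :: "'x \<Rightarrow> 'x \<Rightarrow> nat \<Rightarrow> (nat \<Rightarrow> bool) \<Rightarrow> nat \<Rightarrow> 'x" where
  "enc x x' N b = (\<lambda>i. if i < N then (if b i then x else x') else undefined)"

definition Qf :: "real \<Rightarrow> nat \<Rightarrow> (nat \<Rightarrow> bool) \<Rightarrow> (nat \<Rightarrow> bool) \<Rightarrow> real" where
  "Qf \<beta> N b b' = (\<Prod>i<N. if b i = b' i then 1 else \<beta>)"

lemma bhatta:
  fixes W :: "'s \<Rightarrow> 'x \<Rightarrow> 'y::finite \<Rightarrow> real"
  assumes stoch: "stochastic_family W"
    and bh: "\<And>s. (\<Sum>t\<in>UNIV. sqrt (W s x t * W s x' t)) \<le> \<beta>"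
  shows "(\<Sum>y\<in>words N. sqrt (prod_channel W N y (enc x x' N b) s * prod_channel W N y (enc x x' N b') s))
         \<le> Qf \<beta> N b b'"
proof -
  have nn: "\<And>s a t. W s a t \<ge> 0" and one: "\<And>s a. (\<Sum>t\<in>UNIV. W s a t) = 1"
    using stoch unfolding stochastic_family_def by auto
  define g where "g = (\<lambda>i t. sqrt (W (s i) (enc x x' N b i) t * W (s i) (enc x x' N b' i) t))"
  have "(\<Sum>y\<in>words N. sqrt (prod_channel W N y (enc x x' N b) s * prod_channel W N y (enc x x' N b') s))
      = (\<Sum>y\<in>words N. \<Prod>i<N. g i (y i))"
    unfolding prod_channel_def g_def by (simp add: prod.distrib[symmetric] sqrt_prod)
  also have "\<dots> = (\<Prod>i<N. \<Sum>t\<in>UNIV. g i t)" by (rule sum_words_prod)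
  also have "\<dots> \<le> Qf \<beta> N b b'" unfolding Qf_def
  proof (rule prod_mono, intro conjI)
    fix i assume i: "i \<in> {..<N}"
    show "0 \<le> (\<Sum>t\<in>UNIV. g i t)" unfolding g_def by (intro sum_nonneg real_sqrt_ge_zero mult_nonneg_nonneg nn)
    show "(\<Sum>t\<in>UNIV. g i t) \<le> (if b i = b' i then 1 else \<beta>)"
    proof (cases "b i = b' i")
      case True
      have ee: "enc x x' N b' i = enc x x' N b i" using True unfolding enc_def by simp
      have "g i t = W (s i) (enc x x' N b i) t" for t
        unfolding g_def ee using nn by (simp add: real_sqrt_mult)
      then show ?thesis using True one by simp
    next
      case False
      then have "(\<Sum>t\<in>UNIV. g i t) = (\<Sum>t\<in>UNIV. sqrt (W (s i) x t * W (s i) x' t))"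
        unfolding g_def enc_def using i by (cases "b i") (auto simp: mult.commute)
      then show ?thesis using False bh by simp
    qed
  qed
  finally show ?thesis .
qed

lemma Qf_sum: "(\<Sum>b'\<in>words N. Qf \<beta> N b b') = (1 + \<beta>) ^ N"
proof -
  have "(\<Sum>b'\<in>words N. Qf \<beta> N b b') = (\<Prod>i<N. \<Sum>t\<in>UNIV. if b i = t then 1 else \<beta>)"
    unfolding Qf_def by (rule sum_words_prod)
  also have "\<dots> = (\<Prod>i<N. 1 + \<beta>)"
    by (intro prod.cong refl) (auto simp: UNIV_bool)
  finally show ?thesis by simp
qed

lemma Qf_nonneg: "\<beta> \<ge> 0 \<Longrightarrow> Qf \<beta> N b b' \<ge> 0"
  unfolding Qf_def by (intro prod_nonneg) auto

lemma Qf_sym: "Qf \<beta> N b b' = Qf \<beta> N b' b"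
  unfolding Qf_def by (intro prod.cong) auto

lemma Qf_refl: "Qf \<beta> N b b = 1"
  unfolding Qf_def by simp

lemma ball_card:
  assumes "\<beta> \<ge> 0" "\<theta> > 0"
  shows "real (card {b'\<in>words N. Qf \<beta> N b b' > \<theta>}) * \<theta> \<le> (1 + \<beta>) ^ N"
proof -
  let ?B = "{b'\<in>words N. Qf \<beta> N b b' > \<theta>}"
  have fin: "finite (words N :: (nat \<Rightarrow> bool) set)" by (rule finite_words)
  have "real (card ?B) * \<theta> = (\<Sum>b'\<in>?B. \<theta>)" by simp
  also have "\<dots> \<le> (\<Sum>b'\<in>?B. Qf \<beta> N b b')" by (rule sum_mono) auto
  also have "\<dots> \<le> (\<Sum>b'\<in>words N. Qf \<beta> N b b')"
    by (rule sum_mono2[OF fin]) (auto intro: Qf_nonneg[OF assms(1)])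
  also have "\<dots> = (1 + \<beta>) ^ N" by (rule Qf_sum)
  finally show ?thesis .
qed

lemma greedy:
  fixes U :: "'a set" and B :: "'a \<Rightarrow> 'a \<Rightarrow> bool" and V :: real
  assumes finU: "finite U" and ball: "\<And>a. a \<in> U \<Longrightarrow> real (card {b\<in>U. B a b}) \<le> V"
    and V0: "V \<ge> 0" and refl: "\<And>a. B a a" and sym: "\<And>a b. B a b \<Longrightarrow> B b a"
  shows "real k * V < real (card U) \<Longrightarrow> \<exists>C\<subseteq>U. card C = Suc k \<and> (\<forall>a\<in>C. \<forall>b\<in>C. a \<noteq> b \<longrightarrow> \<not> B a b)"
proof (induction k)
  case 0
  then have "U \<noteq> {}" by auto
  then obtain u where "u \<in> U" by auto
  then show ?case by (intro exI[of _ "{u}"]) auto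
next
  case (Suc k)
  have "real (card U) > 0" using Suc.prems V0
    by (smt (verit) mult_nonneg_nonneg of_nat_0_le_iff)
  have "real k * V \<le> real (Suc k) * V" using V0 by (intro mult_right_mono) auto
  then have "real k * V < real (card U)" using Suc.prems by linarith
  then obtain C where C: "C \<subseteq> U" "card C = Suc k" "\<forall>a\<in>C. \<forall>b\<in>C. a \<noteq> b \<longrightarrow> \<not> B a b"
    using Suc.IH by blast
  have finC: "finite C" using finite_subset[OF C(1) finU] .
  define X where "X = (\<Union>a\<in>C. {b\<in>U. B a b})"
  have "real (card X) \<le> real (\<Sum>a\<in>C. card {b\<in>U. B a b})"
    unfolding X_def using card_UN_le[OF finC, of "\<lambda>a. {b\<in>U. B a b}"] by (simp only: of_nat_le_iff)
  also have "\<dots> = (\<Sum>a\<in>C. real (card {b\<in>U. B a b}))" by simp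
  also have "\<dots> \<le> (\<Sum>a\<in>C. V)" by (rule sum_mono) (use ball C in auto)
  also have "\<dots> < real (card U)" using C Suc.prems by simp
  finally have "card X < card U" by simp
  moreover have XU: "X \<subseteq> U" unfolding X_def by blast
  ultimately have "\<not> U \<subseteq> X" by (metis subset_antisym less_irrefl)
  then obtain u where u: "u \<in> U" "u \<notin> X" by blast
  have uC: "u \<notin> C" using u C refl unfolding X_def by blast
  have nB: "\<And>a. a \<in> C \<Longrightarrow> \<not> B a u" using u unfolding X_def by blast
  show ?case
  proof (intro exI[of _ "insert u C"] conjI)
    show "insert u C \<subseteq> U" using u C by auto
    show "card (insert u C) = Suc (Suc k)" using uC finC C by simp
    show "\<forall>a\<in>insert u C. \<forall>b\<in>insert u C. a \<noteq> b \<longrightarrow> \<not> B a b"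
      using C nB sym by blast
  qed
qed

lemma amgm_strict:
  fixes p q :: real assumes "p \<ge> 0" "q \<ge> 0"
  shows "sqrt (p * q) \<le> (p + q) / 2" and "p \<noteq> q \<Longrightarrow> sqrt (p * q) < (p + q) / 2"
proof -
  have e: "(p + q) / 2 - sqrt (p * q) = (sqrt p - sqrt q)^2 / 2"
    using assms by (simp add: real_sqrt_mult power2_eq_square algebra_simps)
  show "sqrt (p * q) \<le> (p + q) / 2" using e zero_le_power2[of "sqrt p - sqrt q"] by linarith
  assume "p \<noteq> q"
  then have "sqrt p \<noteq> sqrt q" by simp
  then have "(sqrt p - sqrt q)^2 > 0" by simp
  then show "sqrt (p * q) < (p + q) / 2" using e by linarith
qed

lemma bh_lt1:
  fixes W :: "'s \<Rightarrow> 'x \<Rightarrow> 'y::finite \<Rightarrow> real"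
  assumes stoch: "stochastic_family W" and ex: "\<exists>y. W s x y \<noteq> W s x' y"
  shows "(\<Sum>t\<in>UNIV. sqrt (W s x t * W s x' t)) < 1"
proof -
  have nn: "\<And>s a t. W s a t \<ge> 0" and one: "\<And>s a. (\<Sum>t\<in>UNIV. W s a t) = 1"
    using stoch unfolding stochastic_family_def by auto
  obtain y where y: "W s x y \<noteq> W s x' y" using ex by blast
  have "(\<Sum>t\<in>UNIV. sqrt (W s x t * W s x' t)) < (\<Sum>t\<in>UNIV. (W s x t + W s x' t) / 2)"
  proof (rule sum_strict_mono_ex1)
    show "finite (UNIV :: 'y set)" by simp
    show "\<forall>t\<in>UNIV. sqrt (W s x t * W s x' t) \<le> (W s x t + W s x' t) / 2"
      using amgm_strict(1)[OF nn nn] by blast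
    show "\<exists>t\<in>UNIV. sqrt (W s x t * W s x' t) < (W s x t + W s x' t) / 2"
      using amgm_strict(2)[OF nn nn y] by blast
  qed
  also have "\<dots> = 1" using one by (simp add: sum.distrib sum_divide_distrib[symmetric])
  finally show ?thesis .
qed

lemma ach_le0:
  fixes W :: "'s::finite \<Rightarrow> 'x \<Rightarrow> 'y::finite \<Rightarrow> real"
  assumes stoch: "stochastic_family W" and hyp: "\<forall>x x'. \<exists>s. \<forall>y. W s x y = W s x' y"
    and ach: "csr_dc_achievable W R"
  shows "R \<le> 0"
proof (rule ccontr)
  assume "\<not> R \<le> 0"
  then have R: "R > 0" by simp
  define eps where "eps = min R (1/2)"
  have eps: "eps > 0" using R unfolding eps_def by simp
  obtain N0 where N0: "\<forall>N\<ge>N0. \<exists>K f phi. K \<ge> 1 \<and> f ` {..<K} \<subseteq> words N \<and>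
        log 2 (real K) / real N > R - eps \<and> csr_max_error W N K f phi < eps"
    using ach eps unfolding csr_dc_achievable_def by blast
  then obtain K f phi where K: "K \<ge> 1" and rate: "log 2 (real K) / real N0 > R - eps"
    and err: "csr_max_error W N0 K f phi < eps" by blast
  show False
  proof (cases "K \<ge> 2")
    case True
    then have "csr_max_error W N0 K f phi \<ge> 1/2" by (rule code_err_half[OF stoch hyp])
    then show False using err unfolding eps_def by linarith
  next
    case False
    then have "K = 1" using K by simp
    then show False using rate unfolding eps_def by simp
  qed
qed

lemma achievable_pos:
  fixes W :: "'s::finite \<Rightarrow> 'x \<Rightarrow> 'y::finite \<Rightarrow> real"
  assumes stoch: "stochastic_family W" and xx: "\<forall>s. \<exists>y. W s x y \<noteq> W s x' y"
  shows "\<exists>R>0. csr_dc_achievable W R"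
proof -
  define bh where "bh = (\<lambda>s. \<Sum>t\<in>UNIV. sqrt (W s x t * W s x' t))"
  have nn: "\<And>s a t. W s a t \<ge> 0" using stoch unfolding stochastic_family_def by auto
  have bh_lt: "bh s < 1" for s unfolding bh_def using bh_lt1[OF stoch] xx by blast
  have bh0: "bh s \<ge> 0" for s unfolding bh_def by (intro sum_nonneg real_sqrt_ge_zero mult_nonneg_nonneg nn)
  define \<beta> where "\<beta> = Max (range bh)"
  have finr: "finite (range bh)" by simp
  have bhb: "bh s \<le> \<beta>" for s unfolding \<beta>_def by (rule Max_ge[OF finr]) simp
  have "\<beta> \<in> range bh" unfolding \<beta>_def by (rule Max_in[OF finr]) simp
  then have b1: "\<beta> < 1" using bh_lt by auto
  have b0: "\<beta> \<ge> 0" using bh0 bhb order_trans by blast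
  define a where "a = (1 + \<beta>) / 2"
  have a0: "a > 0" and a1: "a < 1" using b0 b1 unfolding a_def by auto
  define u where "u = a powr (1/4)"
  have u0: "u > 0" unfolding u_def using a0 by simp
  have u1: "u < 1" unfolding u_def using powr_less_mono2[of "1/4" a 1] a0 a1 by simp
  have u4: "u ^ 4 = a" unfolding u_def using a0 by (simp add: powr_power)
  have onebeta: "1 + \<beta> = 2 * u ^ 4" using u4 unfolding a_def by simp
  define R where "R = log 2 (1/u)"
  have R0: "R > 0" unfolding R_def using u0 u1 by simp
  have "csr_dc_achievable W R"
    unfolding csr_dc_achievable_def
  proof (intro allI impI)
    fix eps :: real assume eps: "eps > 0"
    have "(\<lambda>n. u ^ n) \<longlonglongrightarrow> 0" by (rule LIMSEQ_power_zero) (use u0 u1 in simp)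
    then have "eventually (\<lambda>n. u ^ n < min (1/2) (eps/2)) sequentially"
      by (rule order_tendstoD) (use eps in simp)
    then obtain N0 where N0: "\<And>n. n \<ge> N0 \<Longrightarrow> u ^ n < min (1/2) (eps/2)"
      by (auto simp: eventually_sequentially)
    show "\<exists>N0. \<forall>N\<ge>N0. \<exists>K f phi. K \<ge> 1 \<and> f ` {..<K} \<subseteq> words N \<and>
        log 2 (real K) / real N > R - eps \<and> csr_max_error W N K f phi < eps"
    proof (rule exI[of _ "max N0 1"], intro allI impI)
      fix N assume N: "max N0 1 \<le> N"
      then have N1: "N \<ge> 1" and uN: "u ^ N < 1/2" "u ^ N < eps / 2" using N0[of N] by auto
      define K where "K = nat \<lceil>(1/u) ^ N\<rceil>"
      have pN: "(1/u) ^ N \<ge> 1" using u0 u1 by (intro one_le_power) simp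
      have K1: "real K \<ge> (1/u) ^ N" unfolding K_def by (rule real_nat_ceiling_ge)
      have K2: "real K \<le> 2 * (1/u) ^ N" unfolding K_def using pN by linarith
      have Kge1: "K \<ge> 1" using K1 pN by linarith
      define \<theta> where "\<theta> = (u^2) ^ N"
      define V where "V = (2 * u^2) ^ N"
      define B where "B = (\<lambda>b b'. Qf \<beta> N b b' > \<theta>)"
      have th0: "\<theta> > 0" unfolding \<theta>_def using u0 by simp
      have u2: "u^2 < 1" using power_less_one_iff[of u 2] u0 u1 by simp
      have th1: "\<theta> < 1" unfolding \<theta>_def using power_less_one_iff[of "u^2" N] u2 N1 by simp
      have e4: "2 * u^4 = (2*u^2) * u^2" by (simp only: power4_eq_xxxx power2_eq_square mult.assoc)
      have VT: "V * \<theta> = (1 + \<beta>) ^ N" unfolding V_def \<theta>_def onebeta e4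
        by (simp only: power_mult_distrib)
      let ?U = "words N :: (nat \<Rightarrow> bool) set"
      have finU: "finite ?U" by (rule finite_words)
      have ball: "real (card {b'\<in>?U. B b b'}) \<le> V" if "b \<in> ?U" for b
      proof -
        have "real (card {b'\<in>?U. B b b'}) * \<theta> \<le> V * \<theta>"
          unfolding B_def VT by (rule ball_card[OF b0 th0])
        then show ?thesis using th0 by simp
      qed
      have V0: "V \<ge> 0" unfolding V_def by simp
      have reflB: "B b b" for b unfolding B_def Qf_refl using th1 by simp
      have symB: "B b b' \<Longrightarrow> B b' b" for b b' unfolding B_def by (simp add: Qf_sym)
      have cardU: "card ?U = 2 ^ N" by (simp add: card_PiE)
      have "real (K - 1) * V \<le> real K * V" using V0 by (intro mult_right_mono) auto
      also have "\<dots> \<le> 2 * (1/u) ^ N * V" using V0 K2 by (intro mult_right_mono) auto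
      also have "\<dots> = 2 * ((1/u) * (2 * u^2)) ^ N" unfolding V_def
        by (simp only: power_mult_distrib mult.assoc)
      also have "(1/u) * (2 * u^2) = 2 * u" using u0 by (simp add: power2_eq_square field_simps)
      also have "2 * (2 * u) ^ N = 2 * u ^ N * 2 ^ N" by (simp only: power_mult_distrib mult_ac)
      also have "\<dots> < 1 * 2 ^ N" using uN by (intro mult_strict_right_mono) auto
      finally have "real (K - 1) * V < real (card ?U)" unfolding cardU by simp
      from greedy[OF finU ball V0 reflB symB this]
      obtain C where C: "C \<subseteq> ?U" "card C = Suc (K - 1)" "\<forall>a\<in>C. \<forall>b\<in>C. a \<noteq> b \<longrightarrow> \<not> B a b"
        by blast
      have cardC: "card C = K" using C Kge1 by simp
      have finC: "finite C" using finite_subset[OF C(1) finU] .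
      obtain h where h: "bij_betw h {0..<K} C" using ex_bij_betw_nat_finite[OF finC] cardC by metis
      have hC: "m < K \<Longrightarrow> h m \<in> C" for m using h by (auto simp: bij_betw_def)
      have hinj: "m < K \<Longrightarrow> m' < K \<Longrightarrow> m \<noteq> m' \<Longrightarrow> h m \<noteq> h m'" for m m'
        using h by (auto simp: bij_betw_def inj_on_def)
      define f where "f = (\<lambda>m. enc x x' N (h m))"
      define phi where "phi = mld W N K f"
      show "\<exists>K f phi. K \<ge> 1 \<and> f ` {..<K} \<subseteq> words N \<and>
        log 2 (real K) / real N > R - eps \<and> csr_max_error W N K f phi < eps"
      proof (intro exI[of _ K] exI[of _ f] exI[of _ phi] conjI)
        show "K \<ge> 1" by (rule Kge1)
        show "f ` {..<K} \<subseteq> words N" by (auto simp: f_def enc_def split: if_splits)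
        have "log 2 ((1/u) ^ N) \<le> log 2 (real K)" using K1 pN by simp
        then have "real N * R \<le> log 2 (real K)" unfolding R_def using u0 by (simp add: log_nat_power)
        then have "R \<le> log 2 (real K) / real N" using N1 by (simp add: field_simps)
        then show "log 2 (real K) / real N > R - eps" using eps by linarith
        let ?S = "(\<lambda>(s, m). 1 - (\<Sum>y\<in>{y\<in>words N. phi y s = m}. prod_channel W N y (f m) s))
          ` (words N \<times> {..<K})"
        have finS: "finite ?S" by (intro finite_imageI finite_cartesian_product finite_words finite_lessThan)
        have neS: "?S \<noteq> {}" using Kge1 by (auto simp: lessThan_empty_iff)
        have ee: "(1/u) * u^2 = u" using u0 by (simp add: power2_eq_square field_simps)
        have each: "1 - (\<Sum>y\<in>{y\<in>words N. phi y s = m}. prod_channel W N y (f m) s) < eps"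
          if m: "m < K" for s m
        proof -
          have "1 - (\<Sum>y\<in>{y\<in>words N. phi y s = m}. prod_channel W N y (f m) s)
             \<le> (\<Sum>m'\<in>{..<K} - {m}. \<Sum>y\<in>words N. sqrt (prod_channel W N y (f m) s * prod_channel W N y (f m') s))"
            unfolding phi_def by (rule err_bound[OF stoch Kge1 m])
          also have "\<dots> \<le> (\<Sum>m'\<in>{..<K} - {m}. \<theta>)"
          proof (rule sum_mono)
            fix m' assume m': "m' \<in> {..<K} - {m}"
            have "(\<Sum>y\<in>words N. sqrt (prod_channel W N y (f m) s * prod_channel W N y (f m') s))
                \<le> Qf \<beta> N (h m) (h m')"
              unfolding f_def by (rule bhatta[OF stoch]) (use bhb in \<open>simp add: bh_def\<close>)
            also have "\<dots> \<le> \<theta>" using C(3) hC[OF m] hC[of m'] hinj[OF m, of m'] m'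
              unfolding B_def by force
            finally show "(\<Sum>y\<in>words N. sqrt (prod_channel W N y (f m) s * prod_channel W N y (f m') s)) \<le> \<theta>" .
          qed
          also have "\<dots> = real (card ({..<K} - {m})) * \<theta>" by simp
          also have "\<dots> \<le> real K * \<theta>"
            using th0 card_mono[of "{..<K}" "{..<K} - {m}"] by (intro mult_right_mono) auto
          also have "\<dots> \<le> 2 * (1/u) ^ N * \<theta>" using K2 th0 by (intro mult_right_mono) auto
          also have "\<dots> = 2 * ((1/u) * u^2) ^ N" unfolding \<theta>_def
            by (simp only: power_mult_distrib mult.assoc)
          also have "\<dots> = 2 * u ^ N" using ee by (simp only:)
          also have "\<dots> < eps" using uN by linarith
          finally show ?thesis .
        qed
        show "csr_max_error W N K f phi < eps"
          unfolding csr_max_error_def using finS neS each by auto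
      qed
    qed
  qed
  then show ?thesis using R0 by blast
qed

theorem proposition2:
  fixes W :: "'s::finite \<Rightarrow> 'x::finite \<Rightarrow> 'y::finite \<Rightarrow> real"
  assumes "stochastic_family W"
  shows "C_CSR_DC W > 0 \<longleftrightarrow>
         (\<exists>x x'. \<forall>s. \<exists>y. W s x y \<noteq> W s x' y)"
proof
  assume C: "C_CSR_DC W > 0"
  show "\<exists>x x'. \<forall>s. \<exists>y. W s x y \<noteq> W s x' y"
  proof (rule ccontr)
    assume "\<not> (\<exists>x x'. \<forall>s. \<exists>y. W s x y \<noteq> W s x' y)"
    then have hyp: "\<forall>x x'. \<exists>s. \<forall>y. W s x y = W s x' y" by blast
    have "C_CSR_DC W \<le> 0" unfolding C_CSR_DC_def
      by (rule Sup_least) (auto dest!: ach_le0[OF assms hyp])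
    with C show False by simp
  qed
next
  assume "\<exists>x x'. \<forall>s. \<exists>y. W s x y \<noteq> W s x' y"
  then obtain x x' where xx: "\<forall>s. \<exists>y. W s x y \<noteq> W s x' y" by blast
  obtain R where R: "R > 0" "csr_dc_achievable W R" using achievable_pos[OF assms xx] by blast
  have le: "ereal R \<le> C_CSR_DC W" unfolding C_CSR_DC_def by (rule Sup_upper) (use R in auto)
  have "0 < ereal R" using R by simp
  then show "C_CSR_DC W > 0" using le by (rule less_le_trans)
qed

end
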